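(* Let $k\geq 3$ be an integer, let $G$ be a graph, and let $G'$ be the graph obtained from $G$ by the $k$-edge-gadget transformation (with respect to any choice of orientations). Then every $k$-partial $k$-coloring $\gamma$ of $G'$ satisfies $\gamma(u)\neq\gamma(v)$ for every edge $\{u,v\}\in E(G)$.
   Context: A $k$-partial $c$-coloring of a graph $G=(V,E)$ is a map $\gamma:V\to\{1,\dots,c\}$ such that every vertex $v$ has at least $\min\{k,\deg_G(v)\}$ neighbors $u$ with $\gamma(u)\neq\gamma(v)$. The $k$-edge-gadget transformation: given a graph $G$ and, for each edge $\{u,v\}\in E(G)$, a fixed choice of ordered pair $(u,v)$, the graph $G'$ is obtained from $G$ by keeping all vertices of $G$, deleting every edge $\{u,v\}$ of $G$, and for each such edge adding $k$ new vertices $(u,v,1),\dots,(u,v,k)$ that form a clique $K_k$, together with the edges $\{u,(u,v,j)\}$ for $j=1,\dots,k-1$ and the edge $\{v,(u,v,k)\}$. (The gadget vertices of distinct edges are distinct.) *)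

theory Defs
  imports Main
begin

definition simple_graph :: "'a set \<Rightarrow> 'a set set \<Rightarrow> bool" where
  "simple_graph V E \<longleftrightarrow> finite V \<and>
     (\<forall>e\<in>E. \<exists>u v. u \<noteq> v \<and> u \<in> V \<and> v \<in> V \<and> e = {u, v})"

definition neighbors :: "'a set \<Rightarrow> 'a set set \<Rightarrow> 'a \<Rightarrow> 'a set" where
  "neighbors V E v = {u \<in> V. {u, v} \<in> E}"

definition degree :: "'a set \<Rightarrow> 'a set set \<Rightarrow> 'a \<Rightarrow> nat" where
  "degree V E v = card (neighbors V E v)"

definition partial_coloring ::
  "'a set \<Rightarrow> 'a set set \<Rightarrow> nat \<Rightarrow> nat \<Rightarrow> ('a \<Rightarrow> nat) \<Rightarrow> bool" where
  "partial_coloring V E k c \<gamma> \<longleftrightarrow>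
     (\<forall>v\<in>V. \<gamma> v \<in> {1..c}) \<and>
     (\<forall>v\<in>V. card {u \<in> neighbors V E v. \<gamma> u \<noteq> \<gamma> v} \<ge> min k (degree V E v))"

definition orientation :: "'a set set \<Rightarrow> ('a set \<Rightarrow> 'a \<times> 'a) \<Rightarrow> bool" where
  "orientation E ori \<longleftrightarrow> (\<forall>e\<in>E. {fst (ori e), snd (ori e)} = e)"

definition gadget_V ::
  "'a set \<Rightarrow> 'a set set \<Rightarrow> ('a set \<Rightarrow> 'a \<times> 'a) \<Rightarrow> nat \<Rightarrow> ('a + ('a \<times> 'a \<times> nat)) set" where
  "gadget_V V E ori k = Inl ` V \<union>
     {Inr (u, v, j) | e u v j. e \<in> E \<and> ori e = (u, v) \<and> j \<in> {1..k}}"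

definition gadget_E ::
  "'a set set \<Rightarrow> ('a set \<Rightarrow> 'a \<times> 'a) \<Rightarrow> nat \<Rightarrow> ('a + ('a \<times> 'a \<times> nat)) set set" where
  "gadget_E E ori k =
     {{Inr (u, v, i), Inr (u, v, j)} | e u v i j.
         e \<in> E \<and> ori e = (u, v) \<and> i \<in> {1..k} \<and> j \<in> {1..k} \<and> i \<noteq> j}
   \<union> {{Inl u, Inr (u, v, j)} | e u v j. e \<in> E \<and> ori e = (u, v) \<and> j \<in> {1..k-1}}
   \<union> {{Inl v, Inr (u, v, k)} | e u v. e \<in> E \<and> ori e = (u, v)}"

end

theory Submission
  imports Defs
begin

lemma nb_char:
  assumes "{y, Inr (a, b, j)} \<in> gadget_E E ori k"
  shows "(\<exists>i\<in>{1..k}. i \<noteq> j \<and> y = Inr (a, b, i)) \<or> (y = Inl a \<and> j \<in> {1..k-1}) \<or> (y = Inl b \<and> j = k)"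
  using assms unfolding gadget_E_def by (auto simp: doubleton_eq_iff)

lemma all_diff:
  assumes pc: "partial_coloring VV EE k c \<gamma>" and w: "w \<in> VV"
    and fin: "finite (neighbors VV EE w)" and cd: "card (neighbors VV EE w) \<le> k"
    and x: "x \<in> neighbors VV EE w"
  shows "\<gamma> x \<noteq> \<gamma> w"
proof -
  let ?N = "neighbors VV EE w"
  let ?A = "{u \<in> ?N. \<gamma> u \<noteq> \<gamma> w}"
  have "card ?A \<ge> min k (degree VV EE w)" using pc w unfolding partial_coloring_def by blast
  hence "card ?A \<ge> card ?N" using cd unfolding degree_def by simp
  moreover have "?A \<subseteq> ?N" by blast
  ultimately have "?A = ?N" using fin by (meson card_seteq)
  thus ?thesis using x by blast
qed

theorem lemma2:
  fixes V :: "'a set" and E :: "'a set set" and k :: nat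
    and ori :: "'a set \<Rightarrow> 'a \<times> 'a" and \<gamma> :: "'a + ('a \<times> 'a \<times> nat) \<Rightarrow> nat"
  assumes "k \<ge> 3"
    and "simple_graph V E"
    and "orientation E ori"
    and "partial_coloring (gadget_V V E ori k) (gadget_E E ori k) k k \<gamma>"
  shows "\<forall>u v. {u, v} \<in> E \<longrightarrow> \<gamma> (Inl u) \<noteq> \<gamma> (Inl v)"
proof (intro allI impI)
  fix u v assume uv: "{u, v} \<in> E"
  let ?VV = "gadget_V V E ori k" and ?EE = "gadget_E E ori k"
  obtain a b where ab: "ori {u,v} = (a, b)" by fastforce
  have abe: "{a, b} = {u, v}" using assms(3) uv ab unfolding orientation_def by (metis fst_conv snd_conv)
  have neq: "a \<noteq> b" and aV: "a \<in> V" and bV: "b \<in> V"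
    using assms(2) uv abe unfolding simple_graph_def by (auto simp: doubleton_eq_iff)
  define x where "x = (\<lambda>j. Inr (a, b, j) :: 'a + ('a \<times> 'a \<times> nat))"
  have xV: "x j \<in> ?VV" if "j \<in> {1..k}" for j
    using that uv ab unfolding gadget_V_def x_def by blast
  have inlV: "Inl a \<in> ?VV" "Inl b \<in> ?VV" using aV bV unfolding gadget_V_def by auto
  have xx: "{x i, x j} \<in> ?EE" if "i \<in> {1..k}" "j \<in> {1..k}" "i \<noteq> j" for i j
    using that uv ab unfolding gadget_E_def x_def by blast
  have xa: "{Inl a, x j} \<in> ?EE" if "j \<in> {1..k-1}" for j
    using that uv ab unfolding gadget_E_def x_def by blast
  have xb: "{Inl b, x k} \<in> ?EE"
    using uv ab unfolding gadget_E_def x_def by blast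
  have diff: "\<gamma> y \<noteq> \<gamma> (x j)" if j: "j \<in> {1..k}" and y: "y \<in> neighbors ?VV ?EE (x j)" for j y
  proof (rule all_diff[OF assms(4) xV[OF j] _ _ y])
    define S where "S = (if j = k then insert (Inl b) (x ` ({1..k} - {j}))
                          else insert (Inl a) (x ` ({1..k} - {j})))"
    have sub: "neighbors ?VV ?EE (x j) \<subseteq> S"
    proof
      fix z assume "z \<in> neighbors ?VV ?EE (x j)"
      hence "{z, Inr (a, b, j)} \<in> ?EE" unfolding neighbors_def x_def by simp
      from nb_char[OF this] show "z \<in> S" unfolding S_def x_def using j by auto
    qed
    have "card S \<le> k"
    proof -
      have "card (x ` ({1..k} - {j})) \<le> k - 1"
      proof -
        have "card (x ` ({1..k} - {j})) \<le> card ({1..k} - {j})" by (rule card_image_le) simp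
        also have "\<dots> = k - 1" using j by simp
        finally show ?thesis .
      qed
      moreover have "card S \<le> Suc (card (x ` ({1..k} - {j})))"
        unfolding S_def by (simp add: card_insert_le_m1)
      ultimately show ?thesis using assms(1) by linarith
    qed
    moreover have "finite S" unfolding S_def by auto
    ultimately show "finite (neighbors ?VV ?EE (x j))" "card (neighbors ?VV ?EE (x j)) \<le> k"
      using sub by (auto intro: finite_subset dest: card_mono[of S])
  qed
  have nbx: "x i \<in> neighbors ?VV ?EE (x j)" if "i \<in> {1..k}" "j \<in> {1..k}" "i \<noteq> j" for i j
    using xx[OF that] xV[OF that(1)] unfolding neighbors_def by auto
  have inj: "inj_on (\<gamma> \<circ> x) {1..k}"
    unfolding inj_on_def using diff nbx by (metis comp_apply)
  have "(\<gamma> \<circ> x) ` {1..k} \<subseteq> {1..k}"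
    using assms(4) xV unfolding partial_coloring_def by auto
  hence img: "(\<gamma> \<circ> x) ` {1..k} = {1..k}"
    using inj card_image[OF inj] by (metis card_subset_eq finite_atLeastAtMost)
  have "\<gamma> (Inl a) \<in> {1..k}" using assms(4) inlV unfolding partial_coloring_def by blast
  then obtain j where j: "j \<in> {1..k}" "\<gamma> (Inl a) = \<gamma> (x j)" using img by (metis comp_apply imageE)
  have "j = k"
  proof (rule ccontr)
    assume "j \<noteq> k"
    hence "j \<in> {1..k-1}" using j by auto
    hence "Inl a \<in> neighbors ?VV ?EE (x j)" using xa inlV unfolding neighbors_def by auto
    thus False using diff j by blast
  qed
  have "Inl b \<in> neighbors ?VV ?EE (x k)" using xb inlV unfolding neighbors_def by auto
  hence "\<gamma> (Inl b) \<noteq> \<gamma> (Inl a)" using diff[of k] j \<open>j = k\<close> assms(1) by auto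
  thus "\<gamma> (Inl u) \<noteq> \<gamma> (Inl v)" using abe neq by (auto simp: doubleton_eq_iff)
qed

end
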